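(* Let $X$ be a real Banach space and $\psi:X\to\mathbb{R}$ a continuous convex function with $\psi(0)=0\le\psi(x)$ for all $x\in X$, which is not constant on any line. Let $C=\{x\in X:\psi(x)\le1\}$, and let $(x_n)_{n\in\mathbb{N}}\subset\partial C$ (the boundary of $C$) and $\xi_n\in\partial\psi(x_n)$ be such that $$X\setminus C=\bigcup_{n=1}^\infty\{y\in X:\langle\xi_n,y-x_n\rangle>0\}.$$ Then $\{\xi_n:n\in\mathbb{N}\}$ separates the points of $X$: for every $v\in X\setminus\{0\}$ there is $n$ with $\langle\xi_n,v\rangle\neq0$.
   Context: $\partial\psi(x)=\{\xi\in X^*:\psi(y)\ge\psi(x)+\langle\xi,y-x\rangle \text{ for all } y\in X\}$. "Not constant on any line" means there are no $x,v\in X$, $v\neq 0$, with $t\mapsto\psi(x+tv)$ constant on $\mathbb{R}$. *)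

theory Defs
  imports "HOL-Analysis.Analysis"
begin

text \<open>Subdifferential; elements of the dual space X* are represented as
  bounded linear functionals X \<Rightarrow> real.\<close>
definition subdiff :: "('a::real_normed_vector \<Rightarrow> real) \<Rightarrow> 'a \<Rightarrow> ('a \<Rightarrow> real) set" where
  "subdiff \<psi> x = {\<xi>. bounded_linear \<xi> \<and> (\<forall>y. \<psi> y \<ge> \<psi> x + \<xi> (y - x))}"

definition not_constant_on_any_line :: "('a::real_vector \<Rightarrow> real) \<Rightarrow> bool" where
  "not_constant_on_any_line \<psi> \<longleftrightarrow>
     \<not> (\<exists>x v. v \<noteq> 0 \<and> (\<forall>t::real. \<psi> (x + t *\<^sub>R v) = \<psi> x))"

end

theory Submission
  imports Defs
begin

theorem mainTheorem8:
  fixes \<psi> :: "'a::banach \<Rightarrow> real" and x :: "nat \<Rightarrow> 'a" and \<xi> :: "nat \<Rightarrow> 'a \<Rightarrow> real"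
  assumes "continuous_on UNIV \<psi>" and "convex_on UNIV \<psi>"
    and "\<psi> 0 = 0" and "\<forall>y. 0 \<le> \<psi> y"
    and "not_constant_on_any_line \<psi>"
    and "\<forall>n. x n \<in> frontier {y. \<psi> y \<le> 1}"
    and "\<forall>n. \<xi> n \<in> subdiff \<psi> (x n)"
    and "UNIV - {y. \<psi> y \<le> 1} = (\<Union>n. {y. \<xi> n (y - x n) > 0})"
  shows "\<forall>v. v \<noteq> 0 \<longrightarrow> (\<exists>n. \<xi> n v \<noteq> 0)"
proof (intro allI impI, rule ccontr)
  fix v :: 'a
  assume v: "v \<noteq> 0" and "\<not> (\<exists>n. \<xi> n v \<noteq> 0)"
  hence z: "\<And>n. \<xi> n v = 0" by auto
  have lin: "\<And>n. linear (\<xi> n)" using assms(7) by (auto simp: subdiff_def bounded_linear.linear)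
  have bd: "\<psi> (t *\<^sub>R v) \<le> 1" for t
  proof (rule ccontr)
    assume "\<not> \<psi> (t *\<^sub>R v) \<le> 1"
    hence "t *\<^sub>R v \<in> UNIV - {y. \<psi> y \<le> 1}" by auto
    then obtain n where n: "\<xi> n (t *\<^sub>R v - x n) > 0" using assms(8) by auto
    have "\<xi> n (t *\<^sub>R v - x n) = t * \<xi> n v + \<xi> n (0 - x n)"
      using lin[of n] by (simp add: linear_diff linear_scale linear_neg)
    hence "\<xi> n (0 - x n) > 0" using n z by simp
    hence "0 \<in> UNIV - {y. \<psi> y \<le> 1}" using assms(8) by blast
    thus False using assms(3) by simp
  qed
  have zero: "\<psi> (s *\<^sub>R v) = 0" for s
  proof (rule ccontr)
    assume ne: "\<psi> (s *\<^sub>R v) \<noteq> 0"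
    hence pos: "\<psi> (s *\<^sub>R v) > 0" using assms(4) by (metis less_eq_real_def)
    define k where "k = 1 / \<psi> (s *\<^sub>R v) + 1"
    have k1: "k \<ge> 1" using pos k_def by simp
    have "\<psi> ((1 - 1/k) *\<^sub>R 0 + (1/k) *\<^sub>R ((k * s) *\<^sub>R v)) \<le> (1 - 1/k) * \<psi> 0 + (1/k) * \<psi> ((k * s) *\<^sub>R v)"
      by (rule convex_onD[OF assms(2)]) (use k1 in auto)
    moreover have "(1 - 1/k) *\<^sub>R 0 + (1/k) *\<^sub>R ((k * s) *\<^sub>R v) = s *\<^sub>R v" using k1 by simp
    ultimately have "\<psi> (s *\<^sub>R v) \<le> (1 - 1/k) * \<psi> 0 + (1/k) * \<psi> ((k * s) *\<^sub>R v)" by (simp only:)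
    hence "\<psi> (s *\<^sub>R v) \<le> (1/k) * \<psi> ((k * s) *\<^sub>R v)" using assms(3) by simp
    also have "\<dots> \<le> 1/k" using bd[of "k * s"] k1 by (simp add: divide_le_cancel)
    finally have "\<psi> (s *\<^sub>R v) * k \<le> 1" using k1 by (simp add: field_simps)
    moreover have "\<psi> (s *\<^sub>R v) * k = 1 + \<psi> (s *\<^sub>R v)" using pos k_def by (simp add: field_simps)
    ultimately show False using pos by simp
  qed
  have "\<forall>t::real. \<psi> (0 + t *\<^sub>R v) = \<psi> 0" using zero assms(3) by simp
  thus False using assms(5) v unfolding not_constant_on_any_line_def by blast
qed

end
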